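(* Let $k$ be a positive integer and let $P=v_1v_2\cdots v_l$ be a path with $l\ge 2k$. Then $P$ has a dispersed $k$-placement $(\phi_1,\dots,\phi_k)$ in $K_l$ such that, for all indices $a,b$ with $|a-b|\ge 2k-1$, the $2k$ vertices $\phi_i(v_a),\phi_j(v_b)$ ($1\le i,j\le k$) are pairwise distinct.
   Context: For a graph $H$ on $m$ vertices, a $k$-placement of $H$ (in $K_m$) is a $k$-tuple $(\phi_1,\dots,\phi_k)$ of bijections $\phi_i:V(H)\to V(K_m)$ such that the edge sets $\phi_i(E(H))=\{\phi_i(x)\phi_i(y):xy\in E(H)\}$ are pairwise disjoint. A vertex $v$ is $k$-placed if $\phi_i(v)\ne\phi_j(v)$ for all $i\neq j$; the placement is dispersed if every vertex is $k$-placed. *)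

theory Defs
  imports Main
begin

(* The path P = v_1 v_2 ... v_l, with v_a identified with the natural number a;
   vertex set {1..l}, edges v_a v_{a+1}. K_l has vertex set {1..l}. *)
definition path_edges :: "nat \<Rightarrow> nat set set" where
  "path_edges l = {{a, Suc a} | a. 1 \<le> a \<and> Suc a \<le> l}"

definition edge_image :: "(nat \<Rightarrow> nat) \<Rightarrow> nat set set \<Rightarrow> nat set set" where
  "edge_image f E = {{f x, f y} | x y. {x, y} \<in> E}"

definition path_placement :: "nat \<Rightarrow> nat \<Rightarrow> (nat \<Rightarrow> nat \<Rightarrow> nat) \<Rightarrow> bool" where
  "path_placement k l phi \<longleftrightarrow>
     (\<forall>i\<in>{1..k}. bij_betw (phi i) {1..l} {1..l}) \<and>
     (\<forall>i\<in>{1..k}. \<forall>j\<in>{1..k}. i \<noteq> j \<longrightarrow>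
        edge_image (phi i) (path_edges l) \<inter> edge_image (phi j) (path_edges l) = {})"

definition k_placed :: "nat \<Rightarrow> (nat \<Rightarrow> nat \<Rightarrow> nat) \<Rightarrow> nat \<Rightarrow> bool" where
  "k_placed k phi v \<longleftrightarrow> (\<forall>i\<in>{1..k}. \<forall>j\<in>{1..k}. i \<noteq> j \<longrightarrow> phi i v \<noteq> phi j v)"

definition dispersed :: "nat \<Rightarrow> nat \<Rightarrow> (nat \<Rightarrow> nat \<Rightarrow> nat) \<Rightarrow> bool" where
  "dispersed k l phi \<longleftrightarrow> (\<forall>v\<in>{1..l}. k_placed k phi v)"

end

theory Submission imports Defs begin
definition zz :: "nat \<Rightarrow> int" where
  "zz r = (if even r then - int (r div 2) else int ((r+1) div 2))"

lemma zz_far: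
  assumes "r + (2*k-1) \<le> s" "s < l" "1 \<le> k"
  shows "int k \<le> \<bar>zz s - zz r\<bar> \<and> \<bar>zz s - zz r\<bar> \<le> int l - int k"
proof -
  obtain p where p: "r = 2*p \<or> r = 2*p+1" by (metis dvd_mult_div_cancel mod2_eq_if odd_two_times_div_two_succ)
  obtain q where q: "s = 2*q \<or> s = 2*q+1" by (metis dvd_mult_div_cancel mod2_eq_if odd_two_times_div_two_succ)
  from p q assms show ?thesis unfolding zz_def by (elim disjE) (simp_all, arith+)
qed

lemma zz_inj: "zz r = zz s \<Longrightarrow> r = s"
  unfolding zz_def by (auto split: if_splits) presburger+

lemma zz_bound: "r < l \<Longrightarrow> s < l \<Longrightarrow> \<bar>zz r - zz s\<bar> < int l"
  unfolding zz_def by (auto split: if_splits; presburger)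

lemma zz_sum: "zz r + zz (Suc r) = 0 \<or> zz r + zz (Suc r) = 1"
  unfolding zz_def by auto

lemma dvd_small: "(l::int) dvd x \<Longrightarrow> \<bar>x\<bar> < l \<Longrightarrow> x = 0"
proof (rule ccontr)
  assume "l dvd x" "\<bar>x\<bar> < l" "x \<noteq> 0"
  then have "l dvd \<bar>x\<bar>" by simp
  then have "l \<le> \<bar>x\<bar>" using \<open>x \<noteq> 0\<close> by (simp add: zdvd_imp_le)
  with \<open>\<bar>x\<bar> < l\<close> show False by simp
qed

definition pp :: "nat \<Rightarrow> nat \<Rightarrow> nat \<Rightarrow> nat" where
  "pp l i a = nat ((int i - 1 + zz (a - 1)) mod int l) + 1"

lemma pp_range: "0 < l \<Longrightarrow> pp l i a \<in> {1..l}"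
proof -
  assume l: "0 < l"
  have "(int i - 1 + zz (a - 1)) mod int l < int l" using l by simp
  moreover have "0 \<le> (int i - 1 + zz (a - 1)) mod int l" using l by simp
  ultimately show ?thesis unfolding pp_def by simp
qed

lemma pp_rep: "0 < l \<Longrightarrow> int (pp l i a) = int i + zz (a-1) - int l * ((int i - 1 + zz (a - 1)) div int l)"
proof -
  assume l: "0 < l"
  have "0 \<le> (int i - 1 + zz (a - 1)) mod int l" using l by simp
  then have "int (pp l i a) = (int i - 1 + zz (a - 1)) mod int l + 1" unfolding pp_def by simp
  also have "\<dots> = int i + zz (a-1) - int l * ((int i - 1 + zz (a - 1)) div int l)"
    by (simp add: minus_mult_div_eq_mod[symmetric])
  finally show ?thesis .
qed

lemma pp_dvd_sub: "0 < l \<Longrightarrow> int l dvd (int (pp l i a) - (int i + zz (a-1)))"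
  using pp_rep[of l i a] by simp

lemma pp_eq: assumes "0 < l" "pp l i a = pp l j b"
  shows "int l dvd (int i + zz (a-1) - int j - zz (b-1))"
proof -
  have "int l dvd (int (pp l i a) - (int i + zz (a-1)))" using pp_dvd_sub assms(1) by blast
  moreover have "int l dvd (int (pp l j b) - (int j + zz (b-1)))" using pp_dvd_sub assms(1) by blast
  ultimately have "int l dvd ((int (pp l j b) - (int j + zz (b-1))) - (int (pp l i a) - (int i + zz (a-1))))"
    using dvd_diff by blast
  then show ?thesis using assms(2) by (simp add: algebra_simps)
qed

lemma pp_inj: assumes "0 < l" shows "inj_on (pp l i) {1..l}"
proof
  fix a b assume ab: "a \<in> {1..l}" "b \<in> {1..l}" "pp l i a = pp l i b"
  have "int l dvd (zz (a-1) - zz (b-1))" using pp_eq[OF assms ab(3)] by simp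
  moreover have "\<bar>zz (a-1) - zz (b-1)\<bar> < int l" using ab zz_bound[of "a-1" l "b-1"] by auto
  ultimately have "zz (a-1) = zz (b-1)" using dvd_small by fastforce
  then have "a - 1 = b - 1" by (rule zz_inj)
  then show "a = b" using ab by auto
qed

lemma pp_bij: assumes "0 < l" shows "bij_betw (pp l i) {1..l} {1..l}"
proof -
  have "pp l i ` {1..l} \<subseteq> {1..l}" using pp_range assms by blast
  then have "pp l i ` {1..l} = {1..l}" using endo_inj_surj pp_inj assms by blast
  then show ?thesis using pp_inj assms by (simp add: bij_betw_def)
qed

lemma pp_placed: assumes "0 < l" "k \<le> l" "i \<in> {1..k}" "j \<in> {1..k}" "pp l i a = pp l j a"
  shows "i = j"
proof -
  have "int l dvd (int i - int j)" using pp_eq[OF assms(1) assms(5)] by simp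
  moreover have "\<bar>int i - int j\<bar> < int l" using assms by auto
  ultimately have "int i - int j = 0" using dvd_small by blast
  then show ?thesis by simp
qed

lemma pp_far: assumes "1 \<le> k" "2*k \<le> l" "i \<in> {1..k}" "j \<in> {1..k}" "a \<in> {1..l}" "b \<in> {1..l}"
  "a + (2*k-1) \<le> b"
  shows "pp l i a \<noteq> pp l j b"
proof
  assume e: "pp l i a = pp l j b"
  have l: "0 < l" using assms by simp
  have d: "int l dvd (int i - int j - (zz (b-1) - zz (a-1)))" using pp_eq[OF l e] by (simp add: algebra_simps)
  have f: "int k \<le> \<bar>zz (b-1) - zz (a-1)\<bar> \<and> \<bar>zz (b-1) - zz (a-1)\<bar> \<le> int l - int k"
    using zz_far[of "a-1" k "b-1" l] assms by auto
  have "\<bar>int i - int j\<bar> < int k" using assms by auto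
  then have "\<bar>int i - int j - (zz (b-1) - zz (a-1))\<bar> < int l"
       "int i - int j - (zz (b-1) - zz (a-1)) \<noteq> 0" using f by linarith+
  then show False using d dvd_small by blast
qed

lemma sum_eq: "{u, v} = {u', v'} \<Longrightarrow> (u::nat) + v = u' + v'"
  by (metis add.commute doubleton_eq_iff)

lemma pp_edge_sum: assumes "0 < l" "1 \<le> a"
  shows "\<exists>e. (e = 0 \<or> e = 1) \<and> int l dvd (int (pp l i a) + int (pp l i (Suc a)) - (2 * int i + e))"
proof -
  have h1: "int l dvd (int (pp l i a) - (int i + zz (a-1)))" using pp_dvd_sub assms(1) by blast
  have h2: "int l dvd (int (pp l i (Suc a)) - (int i + zz a))" using pp_dvd_sub[OF assms(1), of i "Suc a"] by simp
  have "int l dvd ((int (pp l i a) - (int i + zz (a-1))) + (int (pp l i (Suc a)) - (int i + zz a)))"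
    using h1 h2 dvd_add by blast
  moreover have "zz (a-1) + zz a = 0 \<or> zz (a-1) + zz a = 1"
    using zz_sum[of "a-1"] assms(2) by simp
  ultimately show ?thesis
    by (metis (no_types, lifting) add.commute add_diff_eq diff_diff_eq2 diff_add_eq mult_2 add.left_commute diff_diff_eq)
qed

lemma edge_of: assumes "{x, y} \<in> path_edges l"
  shows "\<exists>a. 1 \<le> a \<and> Suc a \<le> l \<and> {x, y} = {a, Suc a}"
  using assms unfolding path_edges_def by auto

lemma pp_edge_disj: assumes "1 \<le> k" "2*k \<le> l" "i \<in> {1..k}" "j \<in> {1..k}" "i \<noteq> j"
  shows "edge_image (pp l i) (path_edges l) \<inter> edge_image (pp l j) (path_edges l) = {}"
proof (rule ccontr)
  assume "\<not> ?thesis"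
  then obtain x y x' y' where xy: "{x, y} \<in> path_edges l" "{x', y'} \<in> path_edges l"
    and eq: "{pp l i x, pp l i y} = {pp l j x', pp l j y'}"
    unfolding edge_image_def by blast
  obtain a where a: "1 \<le> a" "{x, y} = {a, Suc a}" using edge_of[OF xy(1)] by blast
  obtain b where b: "1 \<le> b" "{x', y'} = {b, Suc b}" using edge_of[OF xy(2)] by blast
  have sa: "pp l i x + pp l i y = pp l i a + pp l i (Suc a)"
    using a(2) by (metis add.commute doubleton_eq_iff)
  have sb: "pp l j x' + pp l j y' = pp l j b + pp l j (Suc b)"
    using b(2) by (metis add.commute doubleton_eq_iff)
  have S: "pp l i a + pp l i (Suc a) = pp l j b + pp l j (Suc b)" using sum_eq[OF eq] sa sb by simp
  have l: "0 < l" using assms by simp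
  obtain e where e: "e = 0 \<or> e = 1" "int l dvd (int (pp l i a) + int (pp l i (Suc a)) - (2 * int i + e))"
    using pp_edge_sum[OF l a(1)] by blast
  obtain e' where e': "e' = 0 \<or> e' = 1" "int l dvd (int (pp l j b) + int (pp l j (Suc b)) - (2 * int j + e'))"
    using pp_edge_sum[OF l b(1)] by blast
  have S': "int (pp l i a) + int (pp l i (Suc a)) = int (pp l j b) + int (pp l j (Suc b))"
    using S by (metis of_nat_add)
  have "int l dvd ((int (pp l j b) + int (pp l j (Suc b)) - (2 * int j + e')) - (int (pp l i a) + int (pp l i (Suc a)) - (2 * int i + e)))"
    using e(2) e'(2) dvd_diff by blast
  then have "int l dvd ((2 * int i + e) - (2 * int j + e'))" using S' by (simp add: algebra_simps)
  moreover have "\<bar>(2 * int i + e) - (2 * int j + e')\<bar> < int l" using assms e(1) e'(1) by auto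
  ultimately have "(2 * int i + e) - (2 * int j + e') = 0" using dvd_small by blast
  then show False using e(1) e'(1) assms(5) by auto
qed

lemma card_part: assumes "1 \<le> k" "2*k \<le> l" "a \<in> {1..l}" "b \<in> {1..l}" "a + (2*k-1) \<le> b"
  shows "card ((\<lambda>i. pp l i a) ` {1..k} \<union> (\<lambda>j. pp l j b) ` {1..k}) = 2 * k"
proof -
  have l: "0 < l" "k \<le> l" using assms by auto
  have ia: "inj_on (\<lambda>i. pp l i a) {1..k}" using pp_placed[OF l] by (auto intro: inj_onI)
  have ib: "inj_on (\<lambda>i. pp l i b) {1..k}" using pp_placed[OF l] by (auto intro: inj_onI)
  have dj: "(\<lambda>i. pp l i a) ` {1..k} \<inter> (\<lambda>j. pp l j b) ` {1..k} = {}"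
    using pp_far[OF assms(1,2) _ _ assms(3,4,5)] by fastforce
  show ?thesis using card_Un_disjoint[OF _ _ dj] card_image[OF ia] card_image[OF ib] by simp
qed

theorem mainTheorem5:
  fixes k l :: nat
  assumes "k \<ge> 1" and "l \<ge> 2 * k"
  shows "\<exists>phi. path_placement k l phi \<and> dispersed k l phi \<and>
    (\<forall>a\<in>{1..l}. \<forall>b\<in>{1..l}. 2 * k - 1 \<le> (if a \<le> b then b - a else a - b) \<longrightarrow>
       card ((\<lambda>i. phi i a) ` {1..k} \<union> (\<lambda>j. phi j b) ` {1..k}) = 2 * k)"
proof (intro exI[of _ "pp l"] conjI)
  have l: "0 < l" "k \<le> l" using assms by auto
  show "path_placement k l (pp l)"
    unfolding path_placement_def using pp_bij[OF l(1)] pp_edge_disj[OF assms] by blast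
  show "dispersed k l (pp l)"
    unfolding dispersed_def k_placed_def using pp_placed[OF l] by blast
  show "\<forall>a\<in>{1..l}. \<forall>b\<in>{1..l}. 2 * k - 1 \<le> (if a \<le> b then b - a else a - b) \<longrightarrow>
       card ((\<lambda>i. pp l i a) ` {1..k} \<union> (\<lambda>j. pp l j b) ` {1..k}) = 2 * k"
  proof (intro ballI impI)
    fix a b assume ab: "a \<in> {1..l}" "b \<in> {1..l}" "2 * k - 1 \<le> (if a \<le> b then b - a else a - b)"
    show "card ((\<lambda>i. pp l i a) ` {1..k} \<union> (\<lambda>j. pp l j b) ` {1..k}) = 2 * k"
    proof (cases "a \<le> b")
      case True
      then show ?thesis using card_part[OF assms ab(1,2)] ab(3) by simp
    next
      case False
      then have "card ((\<lambda>i. pp l i b) ` {1..k} \<union> (\<lambda>j. pp l j a) ` {1..k}) = 2 * k"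
        using card_part[OF assms ab(2,1)] ab(3) by simp
      then show ?thesis by (simp add: Un_commute)
    qed
  qed
qed

end
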